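(* Let $k\ge 1$ and let $\{v_1,\ldots,v_k\}$ be a set of $k$ distinct integers that does not have the LR property. Then $\operatorname{lcm}(2,3,\ldots,k+1)$ divides $\prod_{i=1}^{k} v_i$.
   Context: For a real number $x$, $\|x\|$ denotes the distance from $x$ to the nearest integer. A finite set $S$ of $m$ integers has the LR (lonely runner) property if there exists a real $t$ such that $\|tv\|\ge \frac{1}{m+1}$ for all $v\in S$. *)

theory Defs
  imports Complex_Main
begin

definition dist_nearest_int :: "real \<Rightarrow> real" where
  "dist_nearest_int x = (INF n\<in>(\<int>::real set). \<bar>x - n\<bar>)"

definition LR_property :: "int set \<Rightarrow> bool" where
  "LR_property S \<longleftrightarrow>
     (\<exists>t::real. \<forall>v\<in>S. dist_nearest_int (t * of_int v) \<ge> 1 / (real (card S) + 1))"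

end

theory Submission
  imports Defs "HOL-Computational_Algebra.Primes"
begin

lemma dist_ge:
  fixes v q :: int
  assumes "q \<ge> 1" "\<not> q dvd v"
  shows "dist_nearest_int (of_int v / of_int q) \<ge> 1 / of_int q"
  unfolding dist_nearest_int_def
proof (rule cINF_greatest)
  show "(\<int>::real set) \<noteq> {}" by auto
next
  fix n :: real assume "n \<in> \<int>"
  then obtain m where m: "n = of_int m" by (auto elim: Ints_cases)
  have "v \<noteq> q * m" using assms(2) by auto
  hence "\<bar>v - q * m\<bar> \<ge> 1" by linarith
  hence h: "\<bar>real_of_int v - of_int q * of_int m\<bar> \<ge> 1"
    by (metis of_int_1_le_iff of_int_abs of_int_diff of_int_mult)
  have qp: "real_of_int q > 0" using assms(1) by simp
  have "of_int v / of_int q - n = (of_int v - of_int q * of_int m) / of_int q"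
    using qp m by (simp add: field_simps)
  hence "\<bar>of_int v / of_int q - n\<bar> = \<bar>of_int v - of_int q * of_int m\<bar> / of_int q"
    using qp by simp
  thus "1 / real_of_int q \<le> \<bar>of_int v / of_int q - n\<bar>"
    using h qp by (simp add: divide_right_mono)
qed

lemma exists_mult:
  fixes S :: "int set" and k :: nat and q :: int
  assumes "card S = k" and "\<not> LR_property S" and "2 \<le> q" "q \<le> int k + 1"
  shows "\<exists>v\<in>S. q dvd v"
proof (rule ccontr)
  assume "\<not> ?thesis"
  hence nd: "\<forall>v\<in>S. \<not> q dvd v" by auto
  have "\<forall>v\<in>S. dist_nearest_int ((1 / of_int q) * of_int v) \<ge> 1 / (real (card S) + 1)"
  proof
    fix v assume "v \<in> S"
    have a: "dist_nearest_int (of_int v / of_int q) \<ge> 1 / of_int q"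
      using dist_ge[of q v] nd \<open>v \<in> S\<close> assms by auto
    have "real_of_int q \<le> real (card S) + 1" using assms by linarith
    hence "1 / (real (card S) + 1) \<le> 1 / of_int q"
      using assms by (intro divide_left_mono) auto
    thus "dist_nearest_int ((1 / of_int q) * of_int v) \<ge> 1 / (real (card S) + 1)"
      using a by simp
  qed
  thus False using assms(2) unfolding LR_property_def by blast
qed

theorem lemma3:
  fixes S :: "int set" and k :: nat
  assumes "finite S" and "card S = k" and "k \<ge> 1"
    and "\<not> LR_property S"
  shows "int (Lcm {2..k+1}) dvd (\<Prod>v\<in>S. v)"
proof (cases "(\<Prod>v\<in>S. v) = 0")
  case True then show ?thesis by simp
next
  case False
  have "int m dvd (\<Prod>v\<in>S. v)" if "m \<in> {2..k+1}" for m
  proof (rule multiplicity_le_imp_dvd)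
    show "int m \<noteq> 0" using that by auto
  next
    fix p :: int assume p: "prime p"
    define b where "b = multiplicity p (int m)"
    show "multiplicity p (int m) \<le> multiplicity p (\<Prod>v\<in>S. v)"
    proof (cases "b = 0")
      case True then show ?thesis unfolding b_def by simp
    next
      case bne: False
      have d: "p ^ b dvd int m" unfolding b_def by (rule multiplicity_dvd)
      have "p ^ b \<le> int m" using d that by (intro zdvd_imp_le) auto
      moreover have "p ^ b \<ge> 2"
      proof -
        have "p \<ge> 2" using p prime_ge_2_int by blast
        hence "p ^ b \<ge> p ^ 1" using bne by (intro power_increasing) auto
        thus ?thesis using \<open>p \<ge> 2\<close> by simp
      qed
      moreover have "int m \<le> int k + 1" using that by auto
      ultimately obtain v where v: "v \<in> S" "p ^ b dvd v"
        using exists_mult[OF assms(2) assms(4), of "p ^ b"] by auto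
      have "p ^ b dvd (\<Prod>v\<in>S. v)"
        using v assms(1) dvd_prodI[of S v "\<lambda>x. x"] dvd_trans by blast
      thus ?thesis unfolding b_def[symmetric]
        using False p by (intro multiplicity_geI) auto
    qed
  qed
  hence "m dvd nat \<bar>\<Prod>v\<in>S. v\<bar>" if "m \<in> {2..k+1}" for m
    using that by (metis dvd_nat_abs_iff)
  hence "Lcm {2..k+1} dvd nat \<bar>\<Prod>v\<in>S. v\<bar>" by (intro Lcm_least) auto
  thus ?thesis by (metis dvd_nat_abs_iff)
qed

end
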